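(* For every finite field $\mathbb{F}_q$, the eigenvalues of the adjacency matrix of the unit-graph on $\operatorname{Mat}_2(\mathbb{F}_q)$ are exactly: $q^4-q^3-q^2+q$ with multiplicity $1$, $q$ with multiplicity $q^4-q^3-q^2+q$, and $q-q^2$ with multiplicity $q^3+q^2-q-1$.
   Context: The unit-graph on $\operatorname{Mat}_2(\mathbb{F}_q)$ is the graph with vertex set $\operatorname{Mat}_2(\mathbb{F}_q)$ in which $A$ and $B$ are adjacent iff $B - A \in \operatorname{GL}_2(\mathbb{F}_q)$. *)

theory Defs
  imports "HOL-Analysis.Analysis" "HOL-Computational_Algebra.Polynomial"
begin

definition unit_graph_adj :: "'a::field ^2^2 \<Rightarrow> 'a ^2^2 \<Rightarrow> bool" where
  "unit_graph_adj A B \<longleftrightarrow> invertible (B - A)"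

definition unit_graph_adjmat :: "real ^ ('a::{field,finite} ^2^2) ^ ('a ^2^2)" where
  "unit_graph_adjmat = (\<chi> A B. if unit_graph_adj A B then 1 else 0)"

definition charpoly :: "real ^'n::finite ^'n \<Rightarrow> real poly" where
  "charpoly M = det (\<chi> i j. (if i = j then [:0, 1:] else 0) - [:M $ i $ j:])"

end

theory Submission
  imports Defs
begin


lemma poly_det_eval:
  fixes A :: "real poly ^'n::finite^'n"
  shows "poly (det A) x = det (\<chi> i j. poly (A$i$j) x)"
  unfolding det_def by (simp add: poly_sum poly_prod of_int_poly)

lemma coeff_prod_lin1:
  fixes a :: "'i \<Rightarrow> real"
  assumes "finite S"
  shows "coeff (\<Prod>i\<in>S. [:1, a i:]) 1 = (\<Sum>i\<in>S. a i)
       \<and> coeff (\<Prod>i\<in>S. [:1, a i:]) 0 = 1"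
  using assms
proof (induction S rule: finite_induct)
  case empty then show ?case by simp
next
  case (insert x F)
  let ?p = "\<Prod>i\<in>F. [:1, a i:]"
  have e: "(\<Prod>i\<in>insert x F. [:1, a i:]) = [:1, a x:] * ?p" using insert by simp
  have "[:1, a x:] * ?p = ?p + pCons 0 (smult (a x) ?p)"
    by (simp add: algebra_simps)
  then show ?case using insert e by (simp add: coeff_pCons)
qed

lemma coeff_x2_factor:
  fixes p r :: "real poly"
  shows "coeff ([:0, a:] * [:0, b:] * r) 1 = 0"
  by (simp add: coeff_pCons)

lemma det_coeff1:
  fixes E :: "real^'n::finite^'n"
  shows "coeff (det (\<chi> i j. [:if i = j then 1 else 0, E$i$j:])) 1 = trace E"
proof -
  let ?A = "(\<chi> i j. [:if i = j then 1 else 0, E$i$j:]) :: real poly^'n^'n"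
  have z: "coeff (\<Prod>i\<in>UNIV. ?A $ i $ p i) 1 = 0" if p: "p permutes UNIV" "p \<noteq> id" for p
  proof -
    obtain i where i: "p i \<noteq> i" using p(2) by (metis eq_id_iff)
    let ?j = "p i"
    have pj: "p ?j \<noteq> ?j" using i p(1) by (metis permutes_inj injD)
    have ij: "i \<noteq> ?j" using i by simp
    have "(\<Prod>k\<in>UNIV. ?A $ k $ p k) = ?A $ i $ p i * (\<Prod>k\<in>UNIV - {i}. ?A $ k $ p k)"
      by (meson finite UNIV_I prod.remove)
    also have "(\<Prod>k\<in>UNIV - {i}. ?A $ k $ p k) = ?A $ ?j $ p ?j * (\<Prod>k\<in>UNIV - {i} - {?j}. ?A $ k $ p k)"
      using ij by (intro prod.remove) auto
    finally have "(\<Prod>k\<in>UNIV. ?A $ k $ p k) = [:0, E $ i $ p i:] * [:0, E $ ?j $ p ?j:] * (\<Prod>k\<in>UNIV - {i} - {?j}. ?A $ k $ p k)"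
      using i pj by (simp add: mult.assoc)
    then show ?thesis by (simp only: coeff_x2_factor)
  qed
  have "coeff (det ?A) 1 = (\<Sum>p\<in>{p. p permutes UNIV}. coeff (of_int (sign p) * (\<Prod>i\<in>UNIV. ?A $ i $ p i)) 1)"
    unfolding det_def by (simp add: coeff_sum)
  also have "\<dots> = (\<Sum>p\<in>{id}. coeff (of_int (sign p) * (\<Prod>i\<in>UNIV. ?A $ i $ p i)) 1)"
  proof (rule sum.mono_neutral_right)
    show "finite {p. p permutes (UNIV::'n set)}" by (simp add: finite_permutations)
    show "{id} \<subseteq> {p. p permutes (UNIV::'n set)}" by (simp add: permutes_id)
    show "\<forall>i\<in>{p. p permutes UNIV} - {id}. coeff (of_int (sign i) * (\<Prod>ia\<in>UNIV. ?A $ ia $ i ia)) 1 = 0"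
    proof
      fix p assume "p \<in> {p. p permutes (UNIV::'n set)} - {id}"
      then have "p permutes UNIV" "p \<noteq> id" by auto
      have "of_int (sign p) * (\<Prod>ia\<in>UNIV. ?A $ ia $ p ia) = smult (of_int (sign p)) (\<Prod>ia\<in>UNIV. ?A $ ia $ p ia)"
        by (simp add: of_int_poly)
      then show "coeff (of_int (sign p) * (\<Prod>ia\<in>UNIV. ?A $ ia $ p ia)) 1 = 0"
        using z[OF \<open>p permutes UNIV\<close> \<open>p \<noteq> id\<close>] by simp
    qed
  qed
  also have "\<dots> = coeff (\<Prod>i\<in>UNIV. [:1, E $ i $ i:]) 1"
    by (simp add: sign_id)
  also have "\<dots> = trace E" using coeff_prod_lin1[of UNIV "\<lambda>i. E$i$i"] by (simp add: trace_def)
  finally show ?thesis .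
qed

lemma monomial_of_mult:
  fixes Q :: "real poly"
  assumes m: "\<And>u v. poly Q (u * v) = poly Q u * poly Q v" and one: "poly Q 1 = 1"
  shows "\<exists>m. \<forall>u. poly Q u = u ^ m"
proof -
  have Q0: "Q \<noteq> 0" using one by auto
  define d where "d = degree Q"
  have lc: "coeff Q d \<noteq> 0" using Q0 d_def by simp
  have "\<forall>u. poly Q u = u ^ d"
  proof
    fix u
    have "Q \<circ>\<^sub>p [:0, u:] = smult (poly Q u) Q"
      by (rule poly_eq_poly_eq_iff[THEN iffD1]) (auto simp: fun_eq_iff poly_pcompose m)
    hence "coeff (Q \<circ>\<^sub>p [:0, u:]) d = coeff (smult (poly Q u) Q) d" by simp
    hence "u ^ d * coeff Q d = poly Q u * coeff Q d" by (simp add: coeff_pcompose_linear)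
    thus "poly Q u = u ^ d" using lc by simp
  qed
  thus ?thesis by blast
qed



lemma coeff_lin_pow: "coeff ([:1, 1:] ^ m :: real poly) 1 = real m \<and> coeff ([:1, 1:] ^ m :: real poly) 0 = 1"
proof (induction m)
  case 0 then show ?case by simp
next
  case (Suc m)
  have "[:1, 1:] ^ Suc m = [:1,1:] ^ m + pCons 0 ([:1, 1:] ^ m :: real poly)"
    by (simp add: algebra_simps)
  then show ?case using Suc by (simp add: coeff_pCons)
qed

lemma matrix_add_rdistrib':
  fixes A B C :: "real^'n::finite^'n"
  shows "(A + B) ** C = A ** C + B ** C"
  by (simp add: matrix_matrix_mult_def vec_eq_iff sum.distrib algebra_simps)

lemma mat1_plus_scale_mult:
  fixes E :: "real^'n::finite^'n"
  assumes "E ** E = E"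
  shows "(mat 1 + s *\<^sub>R E) ** (mat 1 + t *\<^sub>R E) = mat 1 + (s + t + s * t) *\<^sub>R E"
proof -
  have "(mat 1 + s *\<^sub>R E) ** (mat 1 + t *\<^sub>R E) = mat 1 + t *\<^sub>R E + s *\<^sub>R E + (s * t) *\<^sub>R (E ** E)"
    by (simp add: matrix_add_ldistrib matrix_add_rdistrib' matrix_scalar_ac scalar_matrix_assoc[symmetric] algebra_simps)
  then show ?thesis using assms by (simp add: algebra_simps scaleR_add_left)
qed

lemma idempotent_det:
  fixes E :: "real^'n::finite^'n"
  assumes idem: "E ** E = E"
  shows "\<exists>m. (\<forall>s. det (mat 1 + s *\<^sub>R E) = (1 + s) ^ m) \<and> real m = trace E"
proof -
  define P where "P = det ((\<chi> i j. [:if i = j then 1 else 0, E$i$j:]) :: real poly^'n^'n)"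
  have evP: "poly P s = det (mat 1 + s *\<^sub>R E)" for s
    unfolding P_def poly_det_eval
    by (intro arg_cong[where f=det]) (simp add: vec_eq_iff mat_def)
  define Q where "Q = P \<circ>\<^sub>p [:-1, 1:]"
  have evQ: "poly Q u = det (mat 1 + (u - 1) *\<^sub>R E)" for u
    unfolding Q_def by (simp add: poly_pcompose evP)
  have "\<exists>m. \<forall>u. poly Q u = u ^ m"
  proof (rule monomial_of_mult)
    fix u v :: real
    have "poly Q u * poly Q v = det ((mat 1 + (u - 1) *\<^sub>R E) ** (mat 1 + (v - 1) *\<^sub>R E))"
      by (simp add: evQ det_mul)
    also have "\<dots> = det (mat 1 + (u * v - 1) *\<^sub>R E)"
    proof -
      have h: "(u - 1) + (v - 1) + (u - 1) * (v - 1) = u * v - 1" by (simp add: algebra_simps)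
      show ?thesis by (simp only: mat1_plus_scale_mult[OF idem] h)
    qed
    finally show "poly Q (u * v) = poly Q u * poly Q v" by (simp add: evQ)
  next
    show "poly Q 1 = 1" by (simp add: evQ det_I)
  qed
  then obtain m where m: "\<And>u. poly Q u = u ^ m" by blast
  have ds: "det (mat 1 + s *\<^sub>R E) = (1 + s) ^ m" for s
    using m[of "s + 1"] by (simp add: evQ add.commute)
  have "P = [:1, 1:] ^ m"
    by (rule poly_eq_poly_eq_iff[THEN iffD1]) (auto simp: fun_eq_iff evP ds)
  hence "coeff P 1 = real m" using coeff_lin_pow by simp
  hence "trace E = real m" using det_coeff1[of E] unfolding P_def by simp
  thus ?thesis using ds by auto
qed



definition tri :: "real^'n::finite^'n \<Rightarrow> real \<Rightarrow> real \<Rightarrow> real \<Rightarrow> real^'n^'n" where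
  "tri M a b c = (\<chi> i j. a * (if i = j then 1 else 0) + b * M$i$j + c)"

lemma delta_sum_l: fixes i :: "'n::finite" shows "(\<Sum>k\<in>UNIV. (if i = k then 1 else 0) * f k) = (f i :: real)"
proof -
  have "(\<Sum>k\<in>UNIV. (if i = k then 1 else 0) * f k) = (\<Sum>k\<in>UNIV. if i = k then f k else 0)"
    by (intro sum.cong) auto
  then show ?thesis by (simp add: sum.delta sum.delta')
qed

lemma delta_sum_r: fixes j :: "'n::finite" shows "(\<Sum>k\<in>UNIV. f k * (if k = j then 1 else 0)) = (f j :: real)"
proof -
  have "(\<Sum>k\<in>UNIV. f k * (if k = j then 1 else 0)) = (\<Sum>k\<in>UNIV. if k = j then f k else 0)"
    by (intro sum.cong) auto
  then show ?thesis by (simp add: sum.delta sum.delta')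
qed

lemma tri_mult:
  fixes M :: "real^'n::finite^'n"
  assumes M2: "\<And>i j. (\<Sum>k\<in>UNIV. M$i$k * M$k$j) = \<alpha> * M$i$j + \<beta> * (if i = j then 1 else 0) + \<gamma>"
    and row: "\<And>i. (\<Sum>k\<in>UNIV. M$i$k) = \<kappa>" and col: "\<And>j. (\<Sum>k\<in>UNIV. M$k$j) = \<kappa>"
  shows "tri M a b c ** tri M a' b' c' = tri M (a*a' + \<beta>*b*b') (a*b' + b*a' + \<alpha>*b*b')
           (a*c' + c*a' + \<gamma>*b*b' + \<kappa>*(b*c' + c*b') + real CARD('n)*c*c')"
proof -
  {
    fix i j :: 'n
    let ?d = "\<lambda>i k::'n. (if i = k then 1 else 0) :: real"
    have e: "(a * ?d i k + b * M$i$k + c) * (a' * ?d k j + b' * M$k$j + c') =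
       a*a'*(?d i k * ?d k j) + a*b'*(?d i k * M$k$j) + a*c'*?d i k + b*a'*(M$i$k * ?d k j)
       + b*b'*(M$i$k*M$k$j) + b*c'*M$i$k + c*a'*?d k j + c*b'*M$k$j + c*c'" for k
      by (simp add: algebra_simps)
    have s1: "(\<Sum>k\<in>UNIV. ?d i k * ?d k j) = ?d i j" by (rule delta_sum_l)
    have s2: "(\<Sum>k\<in>UNIV. ?d i k * M$k$j) = M$i$j" by (rule delta_sum_l)
    have s3: "(\<Sum>k\<in>UNIV. ?d i k) = 1" by simp
    have s4: "(\<Sum>k\<in>UNIV. M$i$k * ?d k j) = M$i$j" by (rule delta_sum_r)
    have s5: "(\<Sum>k\<in>UNIV. ?d k j) = 1" by simp
    have "(\<Sum>k\<in>UNIV. (a * ?d i k + b * M$i$k + c) * (a' * ?d k j + b' * M$k$j + c'))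
      = a*a'*(\<Sum>k\<in>UNIV. ?d i k * ?d k j) + a*b'*(\<Sum>k\<in>UNIV. ?d i k * M$k$j) + a*c'*(\<Sum>k\<in>UNIV. ?d i k)
       + b*a'*(\<Sum>k\<in>UNIV. M$i$k * ?d k j) + b*b'*(\<Sum>k\<in>UNIV. M$i$k*M$k$j) + b*c'*(\<Sum>k\<in>UNIV. M$i$k)
       + c*a'*(\<Sum>k\<in>UNIV. ?d k j) + c*b'*(\<Sum>k\<in>UNIV. M$k$j) + c*c'*real CARD('n)"
      by (simp only: e sum.distrib sum_distrib_left[symmetric]) simp
    also have "\<dots> = (a*a' + \<beta>*b*b') * ?d i j + (a*b' + b*a' + \<alpha>*b*b') * M$i$j
           + (a*c' + c*a' + \<gamma>*b*b' + \<kappa>*(b*c' + c*b') + real CARD('n)*c*c')"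
      by (simp only: s1 s2 s3 s4 s5 M2 row col) (simp add: algebra_simps)
    finally have "(\<Sum>k\<in>UNIV. (a * ?d i k + b * M$i$k + c) * (a' * ?d k j + b' * M$k$j + c')) =
       (a*a' + \<beta>*b*b') * ?d i j + (a*b' + b*a' + \<alpha>*b*b') * M$i$j
           + (a*c' + c*a' + \<gamma>*b*b' + \<kappa>*(b*c' + c*b') + real CARD('n)*c*c')" .
  }
  then show ?thesis
    by (simp add: tri_def matrix_matrix_mult_def vec_eq_iff)
qed

lemma trace_tri:
  fixes M :: "real^'n::finite^'n"
  assumes "\<And>i. M$i$i = 0"
  shows "trace (tri M a b c) = (a + c) * real CARD('n)"
  using assms by (simp add: trace_def tri_def algebra_simps)

lemma tri_I: "tri M 1 0 0 = mat 1" by (simp add: tri_def mat_def vec_eq_iff)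

lemma tri_add_scale: "tri M a b c + s *\<^sub>R tri M a' b' c' = tri M (a + s*a') (b + s*b') (c + s*c')"
  by (simp add: tri_def vec_eq_iff algebra_simps)



lemma tri_eqI: "a = a' \<Longrightarrow> b = b' \<Longrightarrow> c = c' \<Longrightarrow> tri M a b c = tri M a' b' c'" by simp

lemma charpoly_srg:
  fixes M :: "real^'n::finite^'n" and q :: real
  assumes q: "q \<ge> 2" and N: "real CARD('n) = q^4"
    and diag: "\<And>i. M$i$i = 0"
    and M2: "\<And>i j. (\<Sum>k\<in>UNIV. M$i$k * M$k$j) = (q + (q - q^2)) * M$i$j + (- (q * (q - q^2))) * (if i = j then 1 else 0) + (q^4 - 2*q^3 + q)"
    and row: "\<And>i. (\<Sum>k\<in>UNIV. M$i$k) = q^4 - q^3 - q^2 + q"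
    and col: "\<And>j. (\<Sum>k\<in>UNIV. M$k$j) = q^4 - q^3 - q^2 + q"
  shows "\<exists>m0 m1 m2. charpoly M = [:-(q^4 - q^3 - q^2 + q), 1:] ^ m0 * [:-q, 1:] ^ m1 * [:-(q - q^2), 1:] ^ m2
     \<and> real m0 = 1 \<and> real m1 = q^4 - q^3 - q^2 + q \<and> real m2 = q^3 + q^2 - q - 1"
proof -
  define k where "k = q^4 - q^3 - q^2 + q"
  define r where "r = q - q^2"
  define n where "n = q^4"
  have q0: "q \<noteq> 0" and n0: "n \<noteq> 0" using q by (auto simp: n_def)
  note TM = tri_mult[of M "q + (q - q^2)" "- (q * (q - q^2))" "q^4 - 2*q^3 + q" "q^4 - q^3 - q^2 + q", OF M2 row col, unfolded N]
  define E0 where "E0 = tri M 0 0 (1/n)"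
  define E1 where "E1 = tri M (-r/q^2) (1/q^2) (-(k-r)/(q^2*n))"
  define E2 where "E2 = tri M (q/q^2) (-1/q^2) (-(q-k)/(q^2*n))"
  have "E0 ** E0 = E0" unfolding E0_def TM
    by (rule tri_eqI) (auto simp: n_def field_simps)
  then obtain m0 where m0: "\<And>s. det (mat 1 + s *\<^sub>R E0) = (1 + s) ^ m0" "real m0 = trace E0"
    using idempotent_det by blast
  have "E1 ** E1 = E1" unfolding E1_def TM
    apply (rule tri_eqI) apply (simp_all add: n_def k_def r_def field_simps q0)
    apply (subst power_Suc[symmetric], simp)
    done
  then obtain m1 where m1: "\<And>s. det (mat 1 + s *\<^sub>R E1) = (1 + s) ^ m1" "real m1 = trace E1"
    using idempotent_det by blast
  have "E2 ** E2 = E2" unfolding E2_def TM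
    apply (rule tri_eqI) apply (simp_all add: n_def k_def r_def field_simps q0)
    apply (subst power_Suc[symmetric], simp)
    done
  then obtain m2 where m2: "\<And>s. det (mat 1 + s *\<^sub>R E2) = (1 + s) ^ m2" "real m2 = trace E2"
    using idempotent_det by blast
  have Ip: "mat 1 + s *\<^sub>R tri M a b c = tri M (1 + s*a) (s*b) (s*c)" for s a b c
    using tri_add_scale[of M 1 0 0 s a b c] by (simp add: tri_I)
  have fact: "tri M x (-1) 0 = ((mat 1 + (x - k - 1) *\<^sub>R E0) ** (mat 1 + (x - q - 1) *\<^sub>R E1)) ** (mat 1 + (x - r - 1) *\<^sub>R E2)" for x
    unfolding E0_def E1_def E2_def Ip TM
    apply (rule tri_eqI) apply (simp_all add: n_def k_def r_def field_simps q0)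
    apply algebra
    done
  have ev: "poly (charpoly M) x = det (tri M x (-1) 0)" for x
    unfolding charpoly_def poly_det_eval
    by (intro arg_cong[where f=det]) (simp add: vec_eq_iff tri_def)
  have "poly (charpoly M) x = poly ([:-k, 1:] ^ m0 * [:-q, 1:] ^ m1 * [:-r, 1:] ^ m2) x" for x
    unfolding ev fact det_mul m0(1) m1(1) m2(1) by simp
  hence cp: "charpoly M = [:-k, 1:] ^ m0 * [:-q, 1:] ^ m1 * [:-r, 1:] ^ m2"
    by (intro poly_eq_poly_eq_iff[THEN iffD1]) auto
  have "real m0 = 1" unfolding m0(2) E0_def trace_tri[OF diag] N n_def using q0 by simp
  moreover have "real m1 = k" unfolding m1(2) E1_def trace_tri[OF diag] N n_def k_def r_def using q0
    apply (simp add: field_simps) by algebra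
  moreover have "real m2 = q^3 + q^2 - q - 1" unfolding m2(2) E2_def trace_tri[OF diag] N n_def k_def r_def using q0
    apply (simp add: field_simps) by algebra
  ultimately show ?thesis using cp unfolding k_def r_def by blast
qed



lemma sum_if_eq_real:
  fixes z :: "'a::finite"
  shows "(\<Sum>d\<in>UNIV. if d = z then (X::real) else Y) = X + (real CARD('a) - 1) * Y"
proof -
  have "(\<Sum>d\<in>UNIV. if d = z then X else Y) = (\<Sum>d\<in>UNIV. (if d = z then X - Y else 0) + Y)"
    by (intro sum.cong) auto
  also have "\<dots> = X - Y + real CARD('a) * Y" by (simp add: sum.distrib)
  finally show ?thesis by (simp add: algebra_simps)
qed

lemma sum_if_mem_real:
  fixes S :: "'a::finite set"
  shows "(\<Sum>d\<in>UNIV. if d \<in> S then (X::real) else Y) = real (card S) * X + (real CARD('a) - real (card S)) * Y"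
proof -
  have "(\<Sum>d\<in>UNIV. if d \<in> S then X else Y) = (\<Sum>d\<in>UNIV. (if d \<in> S then X - Y else 0) + Y)"
    by (intro sum.cong) auto
  also have "\<dots> = (\<Sum>d\<in>UNIV \<inter> S. X - Y) + real CARD('a) * Y"
    by (simp only: sum.distrib sum.inter_restrict[OF finite]) simp
  finally show ?thesis by (simp add: algebra_simps)
qed

lemma card_prod_eq_nz:
  fixes z :: "'a::{field,finite}"
  assumes "z \<noteq> 0"
  shows "card {(b, c). b * c = z} = CARD('a) - 1"
proof -
  have "bij_betw (\<lambda>b. (b, z / b)) (UNIV - {0}) {(b, c). b * c = z}"
    by (rule bij_betw_byWitness[where f'=fst]) (auto simp: assms field_simps)
  then have "card {(b, c). b * c = z} = card (UNIV - {0::'a})" by (simp add: bij_betw_same_card)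
  also have "\<dots> = CARD('a) - 1" by (simp add: card_Diff_subset)
  finally show ?thesis .
qed

lemma card_prod_eq_z:
  "card {(b, c::'a::{field,finite}). b * c = 0} = 2 * CARD('a) - 1"
proof -
  have e: "{(b, c::'a). b * c = 0} = ({0} \<times> UNIV) \<union> (UNIV \<times> {0})" by auto
  have i: "({0::'a} \<times> (UNIV::'a set)) \<inter> ((UNIV::'a set) \<times> {0::'a}) = {(0,0)}" by auto
  have "card ({0::'a} \<times> (UNIV::'a set)) + card ((UNIV::'a set) \<times> {0::'a}) =
     card (({0::'a} \<times> (UNIV::'a set)) \<union> ((UNIV::'a set) \<times> {0::'a})) + card (({0::'a} \<times> (UNIV::'a set)) \<inter> ((UNIV::'a set) \<times> {0::'a}))"
    by (rule card_Un_Int) auto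
  then show ?thesis unfolding e i by (simp add: card_cartesian_product)
qed

definition hr :: "'a::{field,finite} \<Rightarrow> real" where
  "hr z = (if z = 0 then 2 * real CARD('a) - 1 else real CARD('a) - 1)"

lemma card_prod_eq: "real (card {(b, c::'a::{field,finite}). b * c = z}) = hr z"
proof -
  have "CARD('a) \<ge> 1" by (simp add: Suc_leI finite_UNIV_card_ge_0)
  then show ?thesis
    using card_prod_eq_nz[of z] card_prod_eq_z[where 'a='a] by (auto simp: hr_def of_nat_diff)
qed

lemma card_tuples:
  fixes R :: "'a::{field,finite} \<Rightarrow> 'a \<Rightarrow> bool"
  shows "real (card {(a, b, c, d). R a d \<and> a * d - b * c = 0}) =
    (\<Sum>a\<in>UNIV. \<Sum>d\<in>UNIV. if R a d then hr (a * d) else 0)"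
proof -
  let ?S = "Sigma {(a, d). R a d} (\<lambda>(a, d). {(b, c). b * c = a * d})"
  let ?f = "\<lambda>((a, d), (b, c)). (a, b, c, d)"
  have "{(a, b, c, d). R a d \<and> a * d - b * c = 0} = ?f ` ?S"
    by (auto simp: image_def)
  moreover have "inj_on ?f ?S" by (auto simp: inj_on_def)
  ultimately have "card {(a, b, c, d). R a d \<and> a * d - b * c = 0} = card ?S"
    by (simp add: card_image)
  also have "\<dots> = (\<Sum>p\<in>{(a, d). R a d}. card ((\<lambda>(a, d). {(b, c). b * c = a * d}) p))"
    by (rule card_SigmaI) auto
  finally have "real (card {(a, b, c, d). R a d \<and> a * d - b * c = 0}) =
     (\<Sum>p\<in>{(a, d). R a d}. hr (fst p * snd p))"
    by (simp add: card_prod_eq split_beta)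
  also have "\<dots> = (\<Sum>p\<in>UNIV. if p \<in> {(a, d). R a d} then hr (fst p * snd p) else 0)"
    using sum.inter_restrict[of "UNIV :: ('a \<times> 'a) set" "\<lambda>p. hr (fst p * snd p)" "{(a, d). R a d}"]
    by simp
  also have "\<dots> = (\<Sum>(a, d)\<in>UNIV \<times> UNIV. if R a d then hr (a * d) else 0)"
    by (simp add: split_beta UNIV_Times_UNIV[symmetric] del: UNIV_Times_UNIV)
  also have "\<dots> = (\<Sum>a\<in>UNIV. \<Sum>d\<in>UNIV. if R a d then hr (a * d) else 0)"
    by (simp add: sum.cartesian_product)
  finally show ?thesis .
qed



lemma card_sing_tuples:
  "real (card {(a, b, c, d::'a::{field,finite}). True \<and> a * d - b * c = 0}) =
     real CARD('a)^3 + real CARD('a)^2 - real CARD('a)"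
proof -
  let ?q = "real CARD('a)"
  have inner: "(\<Sum>d\<in>UNIV. if True then hr (a * d) else 0) =
      (if a = 0 then ?q * (2 * ?q - 1) else (2 * ?q - 1) + (?q - 1) * (?q - 1))" for a :: 'a
  proof (cases "a = 0")
    case True then show ?thesis by (simp add: hr_def)
  next
    case False
    have "(\<Sum>d\<in>UNIV. if True then hr (a * d) else 0) = (\<Sum>d\<in>UNIV. if d = (0::'a) then 2 * ?q - 1 else ?q - 1)"
      by (intro sum.cong) (auto simp: hr_def False)
    then show ?thesis using False by (simp add: sum_if_eq_real)
  qed
  show ?thesis
    unfolding card_tuples inner sum_if_eq_real
    by (simp add: algebra_simps power2_eq_square power3_eq_cube)
qed

lemma card_trace1_tuples:
  "real (card {(a, b, c, d::'a::{field,finite}). a + d = 1 \<and> a * d - b * c = 0}) =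
     real CARD('a)^2 + real CARD('a)"
proof -
  let ?q = "real CARD('a)"
  have inner: "(\<Sum>d\<in>UNIV. if a + d = 1 then hr (a * d) else 0) =
      (if a \<in> {0, 1} then 2 * ?q - 1 else ?q - 1)" for a :: 'a
  proof -
    have "(\<Sum>d\<in>UNIV. if a + d = 1 then hr (a * d) else 0) = (\<Sum>d\<in>UNIV. if d = 1 - a then hr (a * (1 - a)) else 0)"
    proof (intro sum.cong refl)
      fix d :: 'a
      show "(if a + d = 1 then hr (a * d) else 0) = (if d = 1 - a then hr (a * (1 - a)) else 0)"
      proof (cases "d = 1 - a")
        case True then show ?thesis by simp
      next
        case False
        then have "a + d \<noteq> 1" by (auto simp: algebra_simps)
        then show ?thesis using False by simp
      qed
    qed
    also have "\<dots> = hr (a * (1 - a))" by simp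
    also have "\<dots> = (if a \<in> {0, 1} then 2 * ?q - 1 else ?q - 1)"
      by (auto simp: hr_def right_diff_distrib)
    finally show ?thesis .
  qed
  have c2: "card {0, 1::'a} = 2" by simp
  show ?thesis
    unfolding card_tuples inner sum_if_mem_real c2
    by (simp add: algebra_simps power2_eq_square)
qed

lemma card_d0_tuples:
  "real (card {(a, b, c, d::'a::{field,finite}). d = 0 \<and> a * d - b * c = 0}) =
     2 * real CARD('a)^2 - real CARD('a)"
proof -
  let ?q = "real CARD('a)"
  have inner: "(\<Sum>d\<in>UNIV. if d = 0 then hr (a * d) else 0) = 2 * ?q - 1" for a :: 'a
    by (simp add: hr_def)
  show ?thesis
    unfolding card_tuples inner
    by (simp add: algebra_simps power2_eq_square)
qed



definition mk2 :: "'a \<Rightarrow> 'a \<Rightarrow> 'a \<Rightarrow> 'a \<Rightarrow> 'a^2^2" where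
  "mk2 a b c d = (\<chi> i j. if i = 1 then (if j = 1 then a else b) else (if j = 1 then c else d))"

lemma mk2_simps[simp]: "mk2 a b c d $ 1 $ 1 = a" "mk2 a b c d $ 1 $ 2 = b"
  "mk2 a b c d $ 2 $ 1 = c" "mk2 a b c d $ 2 $ 2 = d"
  by (simp_all add: mk2_def)

lemma mk2_eta: "mk2 (X$1$1) (X$1$2) (X$2$1) (X$2$2) = X"
  by (simp add: vec_eq_iff forall_2)

lemma card_mat2:
  fixes P :: "'a::finite \<Rightarrow> 'a \<Rightarrow> 'a \<Rightarrow> 'a \<Rightarrow> bool"
  shows "card {X::'a^2^2. P (X$1$1) (X$1$2) (X$2$1) (X$2$2)} = card {(a, b, c, d). P a b c d}"
proof -
  have "bij_betw (\<lambda>X::'a^2^2. (X$1$1, X$1$2, X$2$1, X$2$2)) {X::'a^2^2. P (X$1$1) (X$1$2) (X$2$1) (X$2$2)} {(a, b, c, d). P a b c d}"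
    by (rule bij_betw_byWitness[where f'="\<lambda>(a, b, c, d). mk2 a b c d"]) (auto simp: mk2_eta)
  then show ?thesis by (rule bij_betw_same_card)
qed

lemma card_sing:
  "real (card {X::'a::{field,finite}^2^2. det X = 0}) = real CARD('a)^3 + real CARD('a)^2 - real CARD('a)"
proof -
  have e: "{X::'a^2^2. det X = 0} = {X. (\<lambda>a b c d. True \<and> a * d - b * c = 0) (X$1$1) (X$1$2) (X$2$1) (X$2$2)}"
    by (simp add: det_2)
  show ?thesis by (simp only: e card_mat2[of "\<lambda>a b c d. True \<and> a * d - b * c = 0"] card_sing_tuples)
qed

lemma card_T_I:
  "real (card {X::'a::{field,finite}^2^2. det X = 0 \<and> det (mat 1 - X) = 0}) = real CARD('a)^2 + real CARD('a)"
proof -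
  have e: "{X::'a^2^2. det X = 0 \<and> det (mat 1 - X) = 0} = {X. (\<lambda>a b c d. a + d = 1 \<and> a * d - b * c = 0) (X$1$1) (X$1$2) (X$2$1) (X$2$2)}"
  proof (intro Collect_cong)
    fix X :: "'a^2^2"
    have "det (mat 1 - X) = 1 - (X$1$1 + X$2$2) + det X"
      by (simp add: det_2 mat_def algebra_simps)
    then show "(det X = 0 \<and> det (mat 1 - X) = 0) = (\<lambda>a b c d. a + d = 1 \<and> a * d - b * c = 0) (X$1$1) (X$1$2) (X$2$1) (X$2$2)"
      by (auto simp: det_2[of X] algebra_simps)
  qed
  show ?thesis by (simp only: e card_mat2[of "\<lambda>a b c d. a + d = 1 \<and> a * d - b * c = 0"] card_trace1_tuples)
qed

lemma card_T_E11:
  "real (card {X::'a::{field,finite}^2^2. det X = 0 \<and> det (mk2 1 0 0 0 - X) = 0}) = 2 * real CARD('a)^2 - real CARD('a)"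
proof -
  have e: "{X::'a^2^2. det X = 0 \<and> det (mk2 1 0 0 0 - X) = 0} = {X. (\<lambda>a b c d. d = 0 \<and> a * d - b * c = 0) (X$1$1) (X$1$2) (X$2$1) (X$2$2)}"
  proof (intro Collect_cong)
    fix X :: "'a^2^2"
    have "det (mk2 1 0 0 0 - X) = det X - X$2$2"
      by (simp add: det_2 algebra_simps)
    then show "(det X = 0 \<and> det (mk2 1 0 0 0 - X) = 0) = (\<lambda>a b c d. d = 0 \<and> a * d - b * c = 0) (X$1$1) (X$1$2) (X$2$1) (X$2$2)"
      by (auto simp: det_2[of X] algebra_simps)
  qed
  show ?thesis by (simp only: e card_mat2[of "\<lambda>a b c d. d = 0 \<and> a * d - b * c = 0"] card_d0_tuples)
qed



definition Tset :: "'a::field^2^2 \<Rightarrow> ('a^2^2) set" where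
  "Tset D = {X. det X = 0 \<and> det (D - X) = 0}"

lemma matrix_sub_ldistrib': 
  fixes A B C :: "'a::comm_ring_1^'n::finite^'n"
  shows "A ** (B - C) = A ** B - A ** C"
  by (simp add: matrix_matrix_mult_def vec_eq_iff sum_subtractf algebra_simps)

lemma matrix_sub_rdistrib': 
  fixes A B C :: "'a::comm_ring_1^'n::finite^'n"
  shows "(B - C) ** A = B ** A - C ** A"
  by (simp add: matrix_matrix_mult_def vec_eq_iff sum_subtractf algebra_simps)

lemma T_inv:
  fixes P Q D :: "'a::{field,finite}^2^2"
  assumes P: "invertible P" and Q: "invertible Q"
  shows "card (Tset (P ** D ** Q)) = card (Tset D)"
proof -
  obtain P' where P': "P ** P' = mat 1" "P' ** P = mat 1" using P unfolding invertible_def by blast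
  obtain Q' where Q': "Q ** Q' = mat 1" "Q' ** Q = mat 1" using Q unfolding invertible_def by blast
  have c1: "P' ** (P ** X ** Q) ** Q' = X" for X
    by (metis matrix_mul_assoc matrix_mul_lid matrix_mul_rid P'(2) Q'(1))
  have c2: "P ** (P' ** Y ** Q') ** Q = Y" for Y
    by (metis matrix_mul_assoc matrix_mul_lid matrix_mul_rid P'(1) Q'(2))
  have "bij_betw (\<lambda>X. P ** X ** Q) (Tset D) (Tset (P ** D ** Q))"
  proof (rule bij_betw_byWitness[where f'="\<lambda>Y. P' ** Y ** Q'"])
    show "\<forall>a\<in>Tset D. P' ** (P ** a ** Q) ** Q' = a" using c1 by blast
    show "\<forall>a'\<in>Tset (P ** D ** Q). P ** (P' ** a' ** Q') ** Q = a'" using c2 by blast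
    show "(\<lambda>X. P ** X ** Q) ` Tset D \<subseteq> Tset (P ** D ** Q)"
    proof
      fix Y assume "Y \<in> (\<lambda>X. P ** X ** Q) ` Tset D"
      then obtain X where X: "X \<in> Tset D" "Y = P ** X ** Q" by blast
      have "P ** D ** Q - P ** X ** Q = P ** (D - X) ** Q"
        by (simp add: matrix_sub_ldistrib' matrix_sub_rdistrib')
      then show "Y \<in> Tset (P ** D ** Q)" using X by (auto simp: Tset_def det_mul)
    qed
    show "(\<lambda>Y. P' ** Y ** Q') ` Tset (P ** D ** Q) \<subseteq> Tset D"
    proof
      fix X assume "X \<in> (\<lambda>Y. P' ** Y ** Q') ` Tset (P ** D ** Q)"
      then obtain Y where Y: "Y \<in> Tset (P ** D ** Q)" "X = P' ** Y ** Q'" by blast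
      have "D - X = P' ** (P ** D ** Q - Y) ** Q'"
        using Y(2) by (simp add: matrix_sub_ldistrib' matrix_sub_rdistrib' c1)
      then show "X \<in> Tset D" using Y by (auto simp: Tset_def det_mul)
    qed
  qed
  then show ?thesis by (metis bij_betw_same_card)
qed

lemma outer_E11:
  fixes P Q :: "'a::comm_ring_1^2^2"
  shows "P ** mk2 1 0 0 0 ** Q = mk2 (P$1$1*Q$1$1) (P$1$1*Q$1$2) (P$2$1*Q$1$1) (P$2$1*Q$1$2)"
  by (simp add: vec_eq_iff forall_2 matrix_matrix_mult_def sum_2 mk2_def)

lemma inv_mk2: "invertible (mk2 a b c (d::'a::field)) \<longleftrightarrow> a * d - b * c \<noteq> 0"
  by (simp add: invertible_det_nz det_2)

lemma rank1_decomp: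
  fixes D :: "'a::field^2^2"
  assumes nz: "D \<noteq> 0" and sing: "det D = 0"
  shows "\<exists>P Q. invertible P \<and> invertible Q \<and> D = P ** mk2 1 0 0 0 ** Q"
proof -
  define a where "a = D$1$1"
  define b where "b = D$1$2"
  define c where "c = D$2$1"
  define d where "d = D$2$2"
  have D: "D = mk2 a b c d" unfolding a_def b_def c_def d_def by (simp add: mk2_eta)
  have adbc: "a * d = b * c" using sing unfolding D by (simp add: det_2)
  show ?thesis
  proof (cases "a = 0 \<and> b = 0")
    case True
    then have cd: "c \<noteq> 0 \<or> d \<noteq> 0" using nz D by (auto simp: vec_eq_iff forall_2)
    define Q where "Q = (if c \<noteq> 0 then mk2 c d 0 1 else mk2 c d 1 0)"
    have "invertible (mk2 0 1 1 (0::'a))" by (simp add: inv_mk2)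
    moreover have "invertible Q" using cd by (auto simp: Q_def inv_mk2)
    moreover have "D = mk2 0 1 1 0 ** mk2 1 0 0 0 ** Q"
      unfolding outer_E11 D using True by (simp add: Q_def)
    ultimately show ?thesis by blast
  next
    case False
    define t where "t = (if a \<noteq> 0 then c / a else d / b)"
    have ct: "c = t * a" and dt: "d = t * b"
      using False adbc by (auto simp: t_def field_simps)
    define Q where "Q = (if a \<noteq> 0 then mk2 a b 0 1 else mk2 a b 1 0)"
    have "invertible (mk2 1 0 t (1::'a))" by (simp add: inv_mk2)
    moreover have "invertible Q" using False by (auto simp: Q_def inv_mk2)
    moreover have "D = mk2 1 0 t 1 ** mk2 1 0 0 0 ** Q"
      unfolding outer_E11 D using ct dt by (simp add: Q_def)
    ultimately show ?thesis by blast
  qed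
qed



lemma sum_indicator_card:
  fixes P :: "'b::finite \<Rightarrow> bool"
  shows "(\<Sum>x\<in>UNIV. if P x then 1 else 0 :: real) = real (card {x. P x})"
proof -
  have "(\<Sum>x\<in>UNIV. if P x then 1 else 0 :: real) = (\<Sum>x\<in>UNIV. if x \<in> {x. P x} then 1 else 0)" by simp
  also have "\<dots> = (\<Sum>x\<in>UNIV \<inter> {x. P x}. 1)" by (simp only: sum.inter_restrict[OF finite])
  finally show ?thesis by simp
qed

lemma card_shift:
  fixes P :: "'a::{field,finite}^2^2 \<Rightarrow> bool"
  shows "card {B. P (B - A)} = card {X. P X}"
proof -
  have "bij_betw (\<lambda>B. B - A) {B. P (B - A)} {X. P X}"
    by (rule bij_betw_byWitness[where f'="\<lambda>X. X + A"]) auto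
  then show ?thesis by (rule bij_betw_same_card)
qed

lemma card_neg_shift:
  fixes P :: "'a::{field,finite}^2^2 \<Rightarrow> bool"
  shows "card {A. P (B - A)} = card {X. P X}"
proof -
  have "bij_betw (\<lambda>A. B - A) {A. P (B - A)} {X. P X}"
    by (rule bij_betw_byWitness[where f'="\<lambda>X. B - X"]) auto
  then show ?thesis by (rule bij_betw_same_card)
qed

lemma card_T:
  fixes D :: "'a::{field,finite}^2^2"
  shows "real (card (Tset D)) = (if D = 0 then real CARD('a)^3 + real CARD('a)^2 - real CARD('a)
     else if det D \<noteq> 0 then real CARD('a)^2 + real CARD('a) else 2 * real CARD('a)^2 - real CARD('a))"
proof -
  consider "D = 0" | "D \<noteq> 0" "det D \<noteq> 0" | "D \<noteq> 0" "det D = 0" by blast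
  then show ?thesis
  proof cases
    case 1
    have "Tset D = {X. det X = 0}" unfolding 1 Tset_def by (auto simp: det_2 algebra_simps)
    then show ?thesis using 1 card_sing by simp
  next
    case 2
    then have "invertible D" by (simp add: invertible_det_nz)
    then have "card (Tset (D ** mat 1 ** mat 1)) = card (Tset (mat 1 :: 'a^2^2))"
      by (intro T_inv) (auto simp: invertible_det_nz)
    then show ?thesis using 2 card_T_I[where 'a='a] by (simp add: Tset_def)
  next
    case 3
    then obtain P Q where "invertible P" "invertible Q" "D = P ** mk2 1 0 0 0 ** Q"
      using rank1_decomp by blast
    then have "card (Tset D) = card (Tset (mk2 1 0 0 (0::'a)))" using T_inv by metis
    then show ?thesis using 3 card_T_E11[where 'a='a] by (simp add: Tset_def)
  qed
qed

lemma card_N: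
  fixes D :: "'a::{field,finite}^2^2"
  shows "real (card {X. det X \<noteq> 0 \<and> det (D - X) \<noteq> 0}) =
     real CARD('a)^4 - 2 * (real CARD('a)^3 + real CARD('a)^2 - real CARD('a)) + real (card (Tset D))"
proof -
  let ?A = "{X::'a^2^2. det X = 0}"
  let ?B = "{X::'a^2^2. det (D - X) = 0}"
  have cB: "card ?B = card ?A" using card_neg_shift[of "\<lambda>X. det X = 0" D] by simp
  have un: "card ?A + card ?B = card (?A \<union> ?B) + card (?A \<inter> ?B)" by (rule card_Un_Int) auto
  have int: "?A \<inter> ?B = Tset D" by (auto simp: Tset_def)
  have e: "{X. det X \<noteq> 0 \<and> det (D - X) \<noteq> 0} = UNIV - (?A \<union> ?B)" by auto
  have "card (UNIV - (?A \<union> ?B)) = card (UNIV :: ('a^2^2) set) - card (?A \<union> ?B)"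
    by (rule card_Diff_subset) auto
  moreover have "card (?A \<union> ?B) \<le> card (UNIV :: ('a^2^2) set)" by (rule card_mono) auto
  ultimately have "real (card (UNIV - (?A \<union> ?B))) = real (card (UNIV :: ('a^2^2) set)) - real (card (?A \<union> ?B))"
    by simp
  moreover have "real (card (UNIV :: ('a^2^2) set)) = real CARD('a)^4" by (simp add: CARD_vec power_mult[symmetric])
  moreover have "real (card (?A \<union> ?B)) = 2 * real (card ?A) - real (card (Tset D))"
    using un cB int by (metis (no_types, lifting) add_diff_cancel_right' mult_2 of_nat_add)
  ultimately show ?thesis unfolding e using card_sing[where 'a='a] by simp
qed



lemma card_field_ge2: "CARD('a::{field,finite}) \<ge> 2"
proof -
  have "card {0, 1::'a} \<le> CARD('a)" by (rule card_mono) auto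
  then show ?thesis by simp
qed

lemma adjmat_entry:
  "(unit_graph_adjmat :: real^('a::{field,finite}^2^2)^('a^2^2)) $ A $ B = (if det (B - A) \<noteq> 0 then 1 else 0)"
  by (simp add: unit_graph_adjmat_def unit_graph_adj_def invertible_det_nz)

lemma card_nonsing:
  "real (card {X::'a::{field,finite}^2^2. det X \<noteq> 0}) = real CARD('a)^4 - (real CARD('a)^3 + real CARD('a)^2 - real CARD('a))"
proof -
  have e: "{X::'a^2^2. det X \<noteq> 0} = UNIV - {X. det X = 0}" by auto
  have "card (UNIV - {X::'a^2^2. det X = 0}) = card (UNIV :: ('a^2^2) set) - card {X::'a^2^2. det X = 0}"
    by (rule card_Diff_subset) auto
  moreover have "card {X::'a^2^2. det X = 0} \<le> card (UNIV :: ('a^2^2) set)" by (rule card_mono) auto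
  moreover have "real (card (UNIV :: ('a^2^2) set)) = real CARD('a)^4" by (simp add: CARD_vec power_mult[symmetric])
  ultimately show ?thesis unfolding e using card_sing[where 'a='a] by (simp add: of_nat_diff)
qed

theorem corollary3p7:
  fixes q :: nat
  assumes "q = CARD('a::{field, finite})"
  shows "charpoly (unit_graph_adjmat :: real ^ ('a ^2^2) ^ ('a ^2^2)) =
    [:- (real q ^ 4 - real q ^ 3 - real q ^ 2 + real q), 1:] ^ 1
    * [:- real q, 1:] ^ (q ^ 4 - q ^ 3 - q ^ 2 + q)
    * [:- (real q - real q ^ 2), 1:] ^ (q ^ 3 + q ^ 2 - q - 1)"
proof -
  let ?M = "unit_graph_adjmat :: real ^ ('a ^2^2) ^ ('a ^2^2)"
  let ?q = "real CARD('a)"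
  have q2: "?q \<ge> 2" using card_field_ge2[where 'a='a] by linarith
  have N: "real CARD('a^2^2) = ?q^4" by (simp add: CARD_vec power_mult[symmetric])
  have diag: "?M $ A $ A = 0" for A by (simp add: adjmat_entry det_2)
  have row: "(\<Sum>B\<in>UNIV. ?M $ A $ B) = ?q^4 - ?q^3 - ?q^2 + ?q" for A
  proof -
    have "(\<Sum>B\<in>UNIV. ?M $ A $ B) = real (card {B. det (B - A) \<noteq> 0})"
      by (simp add: adjmat_entry sum_indicator_card)
    also have "\<dots> = real (card {X::'a^2^2. det X \<noteq> 0})" by (simp only: card_shift[of "\<lambda>X. det X \<noteq> 0"])
    finally show ?thesis using card_nonsing[where 'a='a] by simp
  qed
  have col: "(\<Sum>A\<in>UNIV. ?M $ A $ B) = ?q^4 - ?q^3 - ?q^2 + ?q" for B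
  proof -
    have "(\<Sum>A\<in>UNIV. ?M $ A $ B) = real (card {A. det (B - A) \<noteq> 0})"
      by (simp add: adjmat_entry sum_indicator_card)
    also have "\<dots> = real (card {X::'a^2^2. det X \<noteq> 0})" by (simp only: card_neg_shift[of "\<lambda>X. det X \<noteq> 0"])
    finally show ?thesis using card_nonsing[where 'a='a] by simp
  qed
  have M2: "(\<Sum>B\<in>UNIV. ?M $ A $ B * ?M $ B $ C) = (?q + (?q - ?q^2)) * ?M $ A $ C
      + (- (?q * (?q - ?q^2))) * (if A = C then 1 else 0) + (?q^4 - 2*?q^3 + ?q)" for A C
  proof -
    have "(\<Sum>B\<in>UNIV. ?M $ A $ B * ?M $ B $ C) = (\<Sum>B\<in>UNIV. if det (B - A) \<noteq> 0 \<and> det (C - B) \<noteq> 0 then 1 else 0)"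
      by (intro sum.cong) (auto simp: adjmat_entry)
    also have "\<dots> = real (card {B. det (B - A) \<noteq> 0 \<and> det (C - B) \<noteq> 0})"
      by (rule sum_indicator_card)
    also have "\<dots> = real (card {B. det (B - A) \<noteq> 0 \<and> det ((C - A) - (B - A)) \<noteq> 0})"
      by simp
    also have "\<dots> = real (card {X. det X \<noteq> 0 \<and> det ((C - A) - X) \<noteq> 0})"
      by (simp only: card_shift[of "\<lambda>X. det X \<noteq> 0 \<and> det ((C - A) - X) \<noteq> 0"])
    also have "\<dots> = ?q^4 - 2 * (?q^3 + ?q^2 - ?q) + real (card (Tset (C - A)))"
      by (rule card_N)
    finally have L: "(\<Sum>B\<in>UNIV. ?M $ A $ B * ?M $ B $ C) = ?q^4 - 2 * (?q^3 + ?q^2 - ?q) + real (card (Tset (C - A)))" .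
    have AC: "(A = C) = (C - A = 0)" by auto
    have d0: "det (0::'a^2^2) = 0" by (simp add: det_2)
    show ?thesis unfolding L unfolding card_T adjmat_entry AC
      by (cases "C - A = 0"; cases "det (C - A) = 0")
        (simp_all add: d0 algebra_simps power2_eq_square power3_eq_cube power4_eq_xxxx)
  qed
  obtain m0 m1 m2 where cp: "charpoly ?M = [:-(?q^4 - ?q^3 - ?q^2 + ?q), 1:] ^ m0 * [:-?q, 1:] ^ m1 * [:-(?q - ?q^2), 1:] ^ m2"
    and r0: "real m0 = 1" and r1: "real m1 = ?q^4 - ?q^3 - ?q^2 + ?q" and r2: "real m2 = ?q^3 + ?q^2 - ?q - 1"
    using charpoly_srg[OF q2 N diag M2 row col] by blast
  have qq: "q \<ge> 2" using assms card_field_ge2[where 'a='a] by simp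
  have a: "2 * q^3 \<le> q * q^3" using qq by (intro mult_right_mono) auto
  have b: "q^2 \<le> q^3" using qq by (intro power_increasing) auto
  have c: "q * q^3 = q^4" by (simp add: eval_nat_numeral)
  have le1: "q^3 + q^2 \<le> q^4" using a b c by linarith
  have d: "q^1 \<le> q^2" using qq by (intro power_increasing) auto
  have e: "1 \<le> q^3" using qq by simp
  have le2: "q + 1 \<le> q^3 + q^2" using d e by simp
  have "m0 = 1" using r0 by simp
  moreover have "real m1 = real (q ^ 4 - q ^ 3 - q ^ 2 + q)"
    using r1 le1 assms by (simp add: of_nat_diff)
  moreover have "real m2 = real (q ^ 3 + q ^ 2 - q - 1)"
    using r2 le2 assms by (simp add: of_nat_diff)
  ultimately show ?thesis using cp assms by (simp only: of_nat_eq_iff)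
qed

end
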